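(* Let $n\ge1$, let $\mathbf{Q}\in\mathbb{R}^{n\times n}$ be symmetric, $\mathbf{c}\in\mathbb{R}^n$, $\mathbf{v}\in\mathbb{R}^n_+$, $V_c>0$. Let $\mathcal{Z}_a=\{\mathbf{z}\in\{0,1\}^n:\ \mathbf{v}^T\mathbf{z}\le V_c\}$, $\mathcal{Z}_b=\{\mathbf{z}\in\mathbb{R}^n:\ \mathbf{v}^T\mathbf{z}\le V_c\}$, $P_q(\mathbf{z})=\tfrac12\mathbf{z}^T\mathbf{Q}\mathbf{z}-\mathbf{c}^T\mathbf{z}$, and for $\beta>0$, $P_\beta(\mathbf{z})=P_q(\mathbf{z})+\tfrac12\beta\|\mathbf{z}\circ\mathbf{z}-\mathbf{z}\|^2$. For $\boldsymbol{\zeta}=(\boldsymbol{\sigma},\tau)$ put $\mathbf{G}(\boldsymbol{\sigma})=\mathbf{Q}+2\,\mathrm{Diag}(\boldsymbol{\sigma})$, $\boldsymbol{\psi}(\boldsymbol{\zeta})=\mathbf{c}-\tau\mathbf{v}+\boldsymbol{\sigma}$, $\mathcal{S}_a^+=\{(\boldsymbol{\sigma},\tau)\in\mathbb{R}^{n+1}:\ \mathbf{G}(\boldsymbol{\sigma})\succ0,\ \tau>0\}$, $$\Xi_\beta(\mathbf{z},\boldsymbol{\zeta})=\tfrac12\mathbf{z}^T\mathbf{G}(\boldsymbol{\sigma})\mathbf{z}-\tfrac12\beta^{-1}\|\boldsymbol{\sigma}\|^2-\mathbf{z}^T\boldsymbol{\psi}(\boldsymbol{\zeta})-\tau V_c,$$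 $$P^d_\beta(\boldsymbol{\zeta})=-\tfrac12\boldsymbol{\psi}(\boldsymbol{\zeta})^T\mathbf{G}(\boldsymbol{\sigma})^{-1}\boldsymbol{\psi}(\boldsymbol{\zeta})-\tfrac12\beta^{-1}\|\boldsymbol{\sigma}\|^2-\tau V_c,\qquad P^d_q(\boldsymbol{\zeta})=-\tfrac12\boldsymbol{\psi}(\boldsymbol{\zeta})^T\mathbf{G}(\boldsymbol{\sigma})^{-1}\boldsymbol{\psi}(\boldsymbol{\zeta})-\tau V_c .$$ For any $\beta>0$, if $\boldsymbol{\zeta}_\beta=(\boldsymbol{\sigma}_\beta,\tau_\beta)\in\mathcal{S}_a^+$ is a solution of $\max\{P^d_\beta(\boldsymbol{\zeta}):\boldsymbol{\zeta}\in\mathcal{S}_a^+\}$, then $\mathbf{z}_\beta=\mathbf{G}(\boldsymbol{\sigma}_\beta)^{-1}\boldsymbol{\psi}(\boldsymbol{\zeta}_\beta)$ is a global minimizer of $P_\beta$ over $\mathcal{Z}_b$. Moreover, there exists $\beta_c>0$ such that if $\beta\ge\beta_c$ and $\mathbf{z}_\beta\in\mathcal{Z}_a$, then $\mathbf{z}_\beta$ is a global minimizer of $P_q$ over $\mathcal{Z}_a$ and $$P_q(\mathbf{z}_\beta)=\min_{\mathbf{z}\in\mathcal{Z}_b}P_\beta(\mathbf{z})=\Xi_\beta(\mathbf{z}_\beta,\boldsymbol{\zeta}_\beta)=\max_{\boldsymbol{\zeta}\in\mathcal{S}_a^+}P^d_\beta(\boldsymbol{\zeta})=P^d_q(\bo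ldsymbol{\zeta}_\beta).$$
   Context: $\mathbf{z}\circ\mathbf{z}=\{z_i^2\}$ is the componentwise square; $\mathrm{Diag}(\boldsymbol{\sigma})$ is the diagonal matrix with diagonal $\boldsymbol{\sigma}$. The problem $\min\{P_q(\mathbf{z}):\mathbf{z}\in\mathcal{Z}_a\}$ is the quadratic knapsack problem. *)

theory Defs
  imports "HOL-Analysis.Analysis"
begin

definition pos_def :: "real^'n^'n \<Rightarrow> bool" where
  "pos_def G \<longleftrightarrow> (\<forall>x. x \<noteq> 0 \<longrightarrow> 0 < x \<bullet> (G *v x))"

definition Diag :: "real^'n \<Rightarrow> real^'n^'n" where
  "Diag s = (\<chi> i j. if i = j then s $ i else 0)"

definition csq :: "real^'n \<Rightarrow> real^'n" where
  "csq z = (\<chi> i. (z $ i)^2)"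

definition Za :: "real^'n \<Rightarrow> real \<Rightarrow> (real^'n) set" where
  "Za v Vc = {z. (\<forall>i. z $ i \<in> {0, 1}) \<and> v \<bullet> z \<le> Vc}"

definition Zb :: "real^'n \<Rightarrow> real \<Rightarrow> (real^'n) set" where
  "Zb v Vc = {z. v \<bullet> z \<le> Vc}"

definition Pq :: "real^'n^'n \<Rightarrow> real^'n \<Rightarrow> real^'n \<Rightarrow> real" where
  "Pq Q c z = (1/2) * (z \<bullet> (Q *v z)) - c \<bullet> z"

definition Pbeta :: "real^'n^'n \<Rightarrow> real^'n \<Rightarrow> real \<Rightarrow> real^'n \<Rightarrow> real" where
  "Pbeta Q c \<beta> z = Pq Q c z + (1/2) * \<beta> * (norm (csq z - z))^2"

definition Gm :: "real^'n^'n \<Rightarrow> real^'n \<Rightarrow> real^'n^'n" where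
  "Gm Q \<sigma> = Q + 2 *\<^sub>R Diag \<sigma>"

definition psi :: "real^'n \<Rightarrow> real^'n \<Rightarrow> (real^'n) \<times> real \<Rightarrow> real^'n" where
  "psi c v \<zeta> = c - snd \<zeta> *\<^sub>R v + fst \<zeta>"

definition Sa_plus :: "real^'n^'n \<Rightarrow> ((real^'n) \<times> real) set" where
  "Sa_plus Q = {(\<sigma>, \<tau>). pos_def (Gm Q \<sigma>) \<and> \<tau> > 0}"

definition Xi :: "real^'n^'n \<Rightarrow> real^'n \<Rightarrow> real^'n \<Rightarrow> real \<Rightarrow> real \<Rightarrow> real^'n \<Rightarrow> (real^'n) \<times> real \<Rightarrow> real" where
  "Xi Q c v Vc \<beta> z \<zeta> = (1/2) * (z \<bullet> (Gm Q (fst \<zeta>) *v z)) - (1/2) * inverse \<beta> * (norm (fst \<zeta>))^2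
      - z \<bullet> psi c v \<zeta> - snd \<zeta> * Vc"

definition Pd_beta :: "real^'n^'n \<Rightarrow> real^'n \<Rightarrow> real^'n \<Rightarrow> real \<Rightarrow> real \<Rightarrow> (real^'n) \<times> real \<Rightarrow> real" where
  "Pd_beta Q c v Vc \<beta> \<zeta> = - (1/2) * (psi c v \<zeta> \<bullet> (matrix_inv (Gm Q (fst \<zeta>)) *v psi c v \<zeta>))
      - (1/2) * inverse \<beta> * (norm (fst \<zeta>))^2 - snd \<zeta> * Vc"

definition Pd_q :: "real^'n^'n \<Rightarrow> real^'n \<Rightarrow> real^'n \<Rightarrow> real \<Rightarrow> (real^'n) \<times> real \<Rightarrow> real" where
  "Pd_q Q c v Vc \<zeta> = - (1/2) * (psi c v \<zeta> \<bullet> (matrix_inv (Gm Q (fst \<zeta>)) *v psi c v \<zeta>)) - snd \<zeta> * Vc"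

definition zdual :: "real^'n^'n \<Rightarrow> real^'n \<Rightarrow> real^'n \<Rightarrow> (real^'n) \<times> real \<Rightarrow> real^'n" where
  "zdual Q c v \<zeta> = matrix_inv (Gm Q (fst \<zeta>)) *v psi c v \<zeta>"

definition is_min_on :: "('a \<Rightarrow> real) \<Rightarrow> 'a set \<Rightarrow> 'a \<Rightarrow> bool" where
  "is_min_on f S x \<longleftrightarrow> x \<in> S \<and> (\<forall>y\<in>S. f x \<le> f y)"

definition is_max_on :: "('a \<Rightarrow> real) \<Rightarrow> 'a set \<Rightarrow> 'a \<Rightarrow> bool" where
  "is_max_on f S x \<longleftrightarrow> x \<in> S \<and> (\<forall>y\<in>S. f y \<le> f x)"

end

theory Submission
  imports Defs
begin

lemma sym_inner:
  fixes G :: "real^'n^'n"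
  assumes "transpose G = G"
  shows "x \<bullet> (G *v y) = y \<bullet> (G *v x)"
proof -
  have "x \<bullet> (G *v y) = (x v* G) \<bullet> y" by (simp add: dot_lmul_matrix)
  also have "x v* G = G *v x" by (metis assms vector_transpose_matrix)
  finally show ?thesis by (simp add: inner_commute)
qed

lemma pos_def_inv:
  fixes G :: "real^'n^'n"
  assumes "pos_def G"
  shows "G *v (matrix_inv G *v p) = p"
proof -
  have "inj ((*v) G)"
  proof (rule injI)
    fix x y assume "G *v x = G *v y"
    then have "G *v (x - y) = 0" by (simp add: matrix_vector_mult_diff_distrib)
    then have "(x - y) \<bullet> (G *v (x - y)) = 0" by simp
    then show "x = y" using assms unfolding pos_def_def by (metis right_minus_eq less_irrefl)
  qed
  then have "invertible G"
    using matrix_left_invertible_injective invertible_left_inverse by blast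
  then have "G ** matrix_inv G = mat 1"
    unfolding invertible_def matrix_inv_def by (rule someI_ex[where P="\<lambda>A'. G ** A' = mat 1 \<and> A' ** G = mat 1", THEN conjunct1])
  then show ?thesis by (metis matrix_vector_mul_assoc matrix_vector_mul_lid)
qed

lemma Diag_mult: "Diag s *v w = (\<chi> i. s $ i * w $ i)"
  by (simp add: Diag_def matrix_vector_mult_def vec_eq_iff if_distrib[where f="\<lambda>x. x * _"] sum.delta cong: if_cong)

lemma diag_inner: "w \<bullet> (Diag s *v w) = s \<bullet> csq w"
  by (simp add: Diag_mult csq_def inner_vec_def power2_eq_square mult_ac)

lemma Gm_inner: "w \<bullet> (Gm Q s *v w) = w \<bullet> (Q *v w) + 2 * (s \<bullet> csq w)"
  by (simp add: Gm_def matrix_vector_mult_add_rdistrib inner_add_right diag_inner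
      scaleR_matrix_vector_assoc[symmetric])

lemma Diag_add: "Diag (a + b) = Diag a + Diag b"
  by (simp add: Diag_def vec_eq_iff)
lemma Diag_scale: "Diag (t *\<^sub>R a) = t *\<^sub>R Diag a"
  by (simp add: Diag_def vec_eq_iff)

lemma Gm_sym: assumes "transpose Q = Q" shows "transpose (Gm Q s) = Gm Q s"
  using assms by (simp add: Gm_def transpose_def Diag_def vec_eq_iff)

lemma pos_lambda:
  fixes G :: "real^'n^'n"
  assumes "pos_def G"
  shows "\<exists>l>0. \<forall>w. l * (norm w)^2 \<le> w \<bullet> (G *v w)"
proof -
  have cont: "continuous_on (sphere 0 1) (\<lambda>w::real^'n. w \<bullet> (G *v w))"
    by (intro continuous_intros continuous_on_id linear_continuous_on matrix_vector_mul_linear)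
  have ne: "sphere (0::real^'n) 1 \<noteq> {}" by simp
  obtain u where u: "u \<in> sphere 0 1" "\<forall>w\<in>sphere 0 1. u \<bullet> (G *v u) \<le> w \<bullet> (G *v w)"
    using continuous_attains_inf[OF compact_sphere ne cont] by blast
  have upos: "0 < u \<bullet> (G *v u)" using u(1) assms unfolding pos_def_def by (metis norm_zero zero_neq_one mem_sphere_0)
  show ?thesis
  proof (intro exI[of _ "u \<bullet> (G *v u)"] conjI upos allI)
    fix w :: "real^'n"
    show "u \<bullet> (G *v u) * (norm w)^2 \<le> w \<bullet> (G *v w)"
    proof (cases "w = 0")
      case True then show ?thesis by simp
    next
      case False
      define e where "e = (1 / norm w) *\<^sub>R w"
      have "e \<in> sphere 0 1" using False by (simp add: e_def)
      then have "u \<bullet> (G *v u) \<le> e \<bullet> (G *v e)" using u by blast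
      moreover have "w = norm w *\<^sub>R e" using False by (simp add: e_def)
      then have "w \<bullet> (G *v w) = (norm w)^2 * (e \<bullet> (G *v e))"
        by (metis (no_types, lifting) inner_scaleR_left inner_scaleR_right matrix_vector_mult_scaleR mult.assoc power2_eq_square)
      ultimately show ?thesis by (metis mult.commute mult_right_mono zero_le_power2)
    qed
  qed
qed


lemma quad_id:
  fixes G :: "real^'n^'n"
  assumes sym: "transpose G = G" and zs: "G *v zs = p"
  shows "(1/2)*(z \<bullet> (G *v z)) - z \<bullet> p = -(1/2)*(p \<bullet> zs) + (1/2)*((z - zs) \<bullet> (G *v (z - zs)))"
proof -
  have s: "zs \<bullet> (G *v z) = z \<bullet> p" using sym_inner[OF sym, of zs z] zs by simp
  have "(z - zs) \<bullet> (G *v (z - zs)) = z \<bullet> (G *v z) - z \<bullet> p - zs \<bullet> (G *v z) + zs \<bullet> p"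
    by (simp add: inner_diff_left inner_diff_right matrix_vector_mult_diff_distrib zs)
  then show ?thesis using s by (simp add: inner_commute algebra_simps)
qed

lemma quad_lower:
  fixes G :: "real^'n^'n"
  assumes sym: "transpose G = G" and mu: "0 < \<mu>" "\<forall>w. \<mu> * (norm w)^2 \<le> w \<bullet> (G *v w)"
    and zs: "G *v zs = p"
  shows "(1/2)*(z \<bullet> (G *v z)) - z \<bullet> p - (norm (G *v z - p))^2 / (2*\<mu>) \<le> -(1/2)*(p \<bullet> zs)"
proof -
  define d where "d = z - zs"
  have gd: "G *v z - p = G *v d" by (simp add: d_def matrix_vector_mult_diff_distrib zs)
  define q where "q = d \<bullet> (G *v d)"
  have q1: "\<mu> * (norm d)^2 \<le> q" using mu(2) q_def by blast
  have q2: "q \<le> norm d * norm (G *v d)" unfolding q_def by (rule norm_cauchy_schwarz)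
  have q3: "\<mu> * q \<le> (norm (G *v d))^2"
  proof (cases "norm d = 0")
    case True then show ?thesis by (simp add: q_def)
  next
    case False
    then have nd: "norm d > 0" by simp
    have "\<mu> * (norm d)^2 \<le> norm d * norm (G *v d)" using q1 q2 by linarith
    then have "\<mu> * norm d \<le> norm (G *v d)" using nd by (simp add: power2_eq_square)
    then have "\<mu> * norm d * norm (G *v d) \<le> norm (G *v d) * norm (G *v d)"
      by (simp add: mult_right_mono)
    moreover have "\<mu> * q \<le> \<mu> * (norm d * norm (G *v d))" using q2 mu(1) by simp
    ultimately show ?thesis by (simp add: power2_eq_square mult.assoc)
  qed
  then have "(1/2) * q \<le> (norm (G *v d))^2 / (2*\<mu>)" using mu(1) by (simp add: field_simps)
  moreover have "(norm (G *v z - p))^2 / (2*\<mu>) = (norm (G *v d))^2 / (2*\<mu>)" using gd by simp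
  moreover have "(1/2)*(z \<bullet> (G *v z)) - z \<bullet> p = -(1/2)*(p \<bullet> zs) + (1/2)*q"
    using quad_id[OF sym zs, of z] unfolding q_def d_def .
  ultimately show ?thesis by linarith
qed

lemma zero_grad:
  fixes g C \<delta> :: real
  assumes "0 < \<delta>" "0 \<le> C" "\<forall>h. \<bar>h\<bar> < \<delta> \<longrightarrow> h * g \<le> C * h^2"
  shows "g = 0"
proof (rule ccontr)
  assume g: "g \<noteq> 0"
  define k where "k = min (\<delta> / (2 * (\<bar>g\<bar> + 1))) (1 / (2 * (C + 1)))"
  have kpos: "k > 0" using assms by (simp add: k_def)
  have k1: "k * \<bar>g\<bar> < \<delta>"
  proof -
    have "k \<le> \<delta> / (2 * (\<bar>g\<bar> + 1))" by (simp add: k_def)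
    then have "k * \<bar>g\<bar> \<le> \<delta> / (2 * (\<bar>g\<bar> + 1)) * \<bar>g\<bar>" by (rule mult_right_mono) simp
    also have "\<dots> < \<delta>"
    proof -
      have a: "0 \<le> \<delta> * \<bar>g\<bar>" using assms(1) by simp
      show ?thesis apply (simp add: field_simps) using a assms(1) by linarith
    qed
    finally show ?thesis .
  qed
  have k2: "C * k \<le> 1/2"
  proof -
    have "k \<le> 1 / (2 * (C + 1))" by (simp add: k_def)
    then have "C * k \<le> C * (1 / (2 * (C + 1)))" by (rule mult_left_mono[OF _ assms(2)])
    also have "\<dots> \<le> 1/2" using assms(2) by (simp add: field_simps)
    finally show ?thesis .
  qed
  have "\<bar>k * g\<bar> < \<delta>" using k1 kpos by (simp add: abs_mult)
  then have "(k * g) * g \<le> C * (k * g)^2" using assms(3) by blast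
  then have "k * g^2 \<le> (C * k) * (k * g^2)" by (simp add: power2_eq_square mult_ac)
  also have "\<dots> \<le> (1/2) * (k * g^2)" using k2 kpos by (intro mult_right_mono) auto
  finally have "k * g^2 \<le> 0" by simp
  moreover have "k * g^2 > 0" using kpos g by simp
  ultimately show False by simp
qed

lemma Xi_eq: "Xi Q c v Vc \<beta> z (s,t) = Pq Q c z + s \<bullet> (csq z - z) - (1/2) * inverse \<beta> * (norm s)^2 + t * (v \<bullet> z - Vc)"
  by (simp add: Xi_def Gm_inner psi_def Pq_def inner_diff_right inner_add_right algebra_simps inner_commute)

lemma pos_from_mu:
  fixes G :: "real^'n^'n"
  assumes "0 < \<mu>" "\<forall>w. \<mu> * (norm w)^2 \<le> w \<bullet> (G *v w)"
  shows "pos_def G"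
  unfolding pos_def_def
proof (intro allI impI)
  fix x :: "real^'n" assume "x \<noteq> 0"
  then have "0 < \<mu> * (norm x)^2" using assms(1) by simp
  then show "0 < x \<bullet> (G *v x)" using assms(2) by (meson less_le_trans)
qed

lemma Pd_eq:
  assumes "pos_def (Gm Q s)"
  shows "Pd_beta Q c v Vc \<beta> (s,t) = Xi Q c v Vc \<beta> (zdual Q c v (s,t)) (s,t)"
proof -
  have e: "Gm Q s *v zdual Q c v (s,t) = psi c v (s,t)"
    unfolding zdual_def using pos_def_inv[OF assms] by simp
  show ?thesis unfolding Pd_beta_def Xi_def using e
    by (simp add: zdual_def inner_commute)
qed

lemma Pd_lower:
  assumes symQ: "transpose Q = Q" and mu: "0 < \<mu>" "\<forall>w. \<mu> * (norm w)^2 \<le> w \<bullet> (Gm Q s *v w)"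
  shows "Xi Q c v Vc \<beta> z (s,t) - (norm (Gm Q s *v z - psi c v (s,t)))^2 / (2*\<mu>) \<le> Pd_beta Q c v Vc \<beta> (s,t)"
proof -
  have pd: "pos_def (Gm Q s)" using pos_from_mu[OF mu] .
  have e: "Gm Q s *v zdual Q c v (s,t) = psi c v (s,t)"
    unfolding zdual_def using pos_def_inv[OF pd] by simp
  have "(1/2)*(z \<bullet> (Gm Q s *v z)) - z \<bullet> psi c v (s,t) - (norm (Gm Q s *v z - psi c v (s,t)))^2 / (2*\<mu>)
      \<le> -(1/2)*(psi c v (s,t) \<bullet> zdual Q c v (s,t))"
    by (rule quad_lower[OF Gm_sym[OF symQ] mu e])
  then show ?thesis unfolding Xi_def Pd_beta_def zdual_def by simp
qed

lemma Pd_le_Xi: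
  assumes symQ: "transpose Q = Q" and pd: "pos_def (Gm Q s)"
  shows "Pd_beta Q c v Vc \<beta> (s,t) \<le> Xi Q c v Vc \<beta> y (s,t)"
proof -
  have e: "Gm Q s *v zdual Q c v (s,t) = psi c v (s,t)"
    unfolding zdual_def using pos_def_inv[OF pd] by simp
  have nn: "0 \<le> (y - zdual Q c v (s,t)) \<bullet> (Gm Q s *v (y - zdual Q c v (s,t)))"
  proof (cases "y - zdual Q c v (s,t) = 0")
    case True then show ?thesis by simp
  next
    case False then show ?thesis using pd unfolding pos_def_def by (simp add: less_imp_le)
  qed
  show ?thesis using quad_id[OF Gm_sym[OF symQ] e, of y] nn unfolding Xi_def Pd_beta_def zdual_def by simp
qed


lemma amgm_beta: fixes a b \<beta> :: real assumes bpos: "\<beta> > 0"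
  shows "a * b \<le> (1/2) * inverse \<beta> * a^2 + (1/2) * \<beta> * b^2"
proof -
        have "0 \<le> (a - \<beta> * b)^2" by simp
        moreover have "(a - \<beta> * b)^2 = a^2 + \<beta>^2 * b^2 - 2 * \<beta> * (a * b)"
          by (simp add: power2_diff power_mult_distrib mult_ac)
        ultimately have h1: "2 * \<beta> * (a * b) \<le> a^2 + \<beta>^2 * b^2" by linarith
        have i: "\<beta> * inverse \<beta> = 1" using bpos by simp
        have r: "2*\<beta>*((1/2)*inverse \<beta>*a^2 + (1/2)*\<beta>*b^2) = (\<beta> * inverse \<beta>)*a^2 + \<beta>^2*b^2"
          by (simp add: distrib_left power2_eq_square mult_ac)
        have "2*\<beta>*(a*b) \<le> 2*\<beta>*((1/2)*inverse \<beta>*a^2 + (1/2)*\<beta>*b^2)" using h1 r i by simp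
        then show ?thesis using bpos by simp
qed

lemma core:
  fixes Q :: "real^'n^'n"
  assumes symQ: "transpose Q = Q" and bpos: "\<beta> > 0"
    and mx: "is_max_on (Pd_beta Q c v Vc \<beta>) (Sa_plus Q) (s,t)"
  defines "z \<equiv> zdual Q c v (s,t)"
  shows "s = \<beta> *\<^sub>R (csq z - z)" and "v \<bullet> z = Vc"
    and "Pbeta Q c \<beta> z = Xi Q c v Vc \<beta> z (s,t)"
    and "Pd_beta Q c v Vc \<beta> (s,t) = Xi Q c v Vc \<beta> z (s,t)"
    and "is_min_on (Pbeta Q c \<beta>) (Zb v Vc) z"
proof -
  have mem: "(s,t) \<in> Sa_plus Q" and le: "\<And>\<xi>. \<xi> \<in> Sa_plus Q \<Longrightarrow> Pd_beta Q c v Vc \<beta> \<xi> \<le> Pd_beta Q c v Vc \<beta> (s,t)"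
    using mx unfolding is_max_on_def by auto
  have pd: "pos_def (Gm Q s)" and tpos: "t > 0" using mem unfolding Sa_plus_def by auto
  obtain l where lpos: "l > 0" and lb: "\<forall>w. l * (norm w)^2 \<le> w \<bullet> (Gm Q s *v w)"
    using pos_lambda[OF pd] by blast
  have Gz: "Gm Q s *v z = psi c v (s,t)"
    unfolding z_def zdual_def using pos_def_inv[OF pd] by simp
  have PdX: "Pd_beta Q c v Vc \<beta> (s,t) = Xi Q c v Vc \<beta> z (s,t)"
    unfolding z_def by (rule Pd_eq[OF pd])
  then show "Pd_beta Q c v Vc \<beta> (s,t) = Xi Q c v Vc \<beta> z (s,t)" .
  \<comment> \<open>stationarity in tau\<close>
  have gt: "v \<bullet> z - Vc = 0"
  proof (rule zero_grad[of t "(norm v)^2 / (2*l)"])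
    show "0 < t" by (rule tpos)
    show "0 \<le> (norm v)^2 / (2*l)" using lpos by simp
    show "\<forall>h. \<bar>h\<bar> < t \<longrightarrow> h * (v \<bullet> z - Vc) \<le> (norm v)^2 / (2*l) * h^2"
    proof (intro allI impI)
      fix h :: real assume h: "\<bar>h\<bar> < t"
      have m2: "(s, t+h) \<in> Sa_plus Q" using h pd unfolding Sa_plus_def by auto
      have "Xi Q c v Vc \<beta> z (s,t+h) - (norm (Gm Q s *v z - psi c v (s,t+h)))^2 / (2*l) \<le> Pd_beta Q c v Vc \<beta> (s,t+h)"
        by (rule Pd_lower[OF symQ lpos lb])
      also have "\<dots> \<le> Xi Q c v Vc \<beta> z (s,t)" using le[OF m2] PdX by simp
      finally have A: "Xi Q c v Vc \<beta> z (s,t+h) - (norm (Gm Q s *v z - psi c v (s,t+h)))^2 / (2*l) \<le> Xi Q c v Vc \<beta> z (s,t)" .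
      have "Gm Q s *v z - psi c v (s,t+h) = h *\<^sub>R v" using Gz by (simp add: psi_def algebra_simps)
      then have B: "(norm (Gm Q s *v z - psi c v (s,t+h)))^2 = h^2 * (norm v)^2" by (simp add: power_mult_distrib)
      have C: "Xi Q c v Vc \<beta> z (s,t+h) = Xi Q c v Vc \<beta> z (s,t) + h * (v \<bullet> z - Vc)"
        by (simp add: Xi_eq algebra_simps)
      show "h * (v \<bullet> z - Vc) \<le> (norm v)^2 / (2*l) * h^2" using A B C by (simp add: algebra_simps)
    qed
  qed
  then show vz: "v \<bullet> z = Vc" by simp
  \<comment> \<open>stationarity in sigma\<close>
  have gs: "(csq z - z) $ i - inverse \<beta> * s $ i = 0" for i
  proof -
    define e :: "real^'n" where "e = axis i 1"
    define K where "K = (norm (2 *\<^sub>R (Diag e *v z) - e))^2"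
    show ?thesis
    proof (rule zero_grad[of "l/4" "inverse \<beta> / 2 + K / l"])
      show "0 < l/4" using lpos by simp
      show "0 \<le> inverse \<beta> / 2 + K / l" using lpos bpos by (simp add: K_def)
      show "\<forall>h. \<bar>h\<bar> < l/4 \<longrightarrow> h * ((csq z - z) $ i - inverse \<beta> * s $ i) \<le> (inverse \<beta> / 2 + K / l) * h^2"
      proof (intro allI impI)
        fix h :: real assume h: "\<bar>h\<bar> < l/4"
        define s' where "s' = s + h *\<^sub>R e"
        have ee: "e \<bullet> x = x $ i" for x :: "real^'n" by (simp add: e_def inner_axis')
        have lb': "\<forall>w. (l/2) * (norm w)^2 \<le> w \<bullet> (Gm Q s' *v w)"
        proof
          fix w :: "real^'n"
          have q: "w \<bullet> (Gm Q s' *v w) = w \<bullet> (Gm Q s *v w) + 2 * h * (w $ i)^2"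
            by (simp add: Gm_inner s'_def inner_add_left ee csq_def algebra_simps)
          have wi: "(w $ i)^2 \<le> (norm w)^2"
            using component_le_norm_cart[of w i] by (metis abs_ge_zero power2_abs power_mono)
          have "- (2 * h * (w $ i)^2) \<le> 2 * \<bar>h\<bar> * (norm w)^2"
          proof -
            have "- (2 * h * (w $ i)^2) \<le> 2 * \<bar>h\<bar> * (w $ i)^2" by (simp add: abs_if)
            also have "\<dots> \<le> 2 * \<bar>h\<bar> * (norm w)^2" using wi by (simp add: mult_left_mono)
            finally show ?thesis .
          qed
          moreover have "2 * \<bar>h\<bar> * (norm w)^2 \<le> (l/2) * (norm w)^2"
            using h by (intro mult_right_mono) auto
          ultimately show "(l/2) * (norm w)^2 \<le> w \<bullet> (Gm Q s' *v w)" using q lb[rule_format, of w] by linarith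
        qed
        have l2: "0 < l/2" using lpos by simp
        have m2: "(s', t) \<in> Sa_plus Q" using pos_from_mu[OF l2 lb'] tpos unfolding Sa_plus_def by auto
        have "Xi Q c v Vc \<beta> z (s',t) - (norm (Gm Q s' *v z - psi c v (s',t)))^2 / (2*(l/2)) \<le> Pd_beta Q c v Vc \<beta> (s',t)"
          by (rule Pd_lower[OF symQ l2 lb'])
        also have "\<dots> \<le> Xi Q c v Vc \<beta> z (s,t)" using le[OF m2] PdX by simp
        finally have A: "Xi Q c v Vc \<beta> z (s',t) - (norm (Gm Q s' *v z - psi c v (s',t)))^2 / l \<le> Xi Q c v Vc \<beta> z (s,t)" by simp
        have Gs: "Gm Q s' = Gm Q s + (2*h) *\<^sub>R Diag e"
          by (simp add: Gm_def s'_def Diag_add Diag_scale algebra_simps)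
        have "Gm Q s' *v z - psi c v (s',t) = h *\<^sub>R (2 *\<^sub>R (Diag e *v z) - e)"
          unfolding Gs using Gz
          by (simp add: matrix_vector_mult_add_rdistrib scaleR_matrix_vector_assoc[symmetric] psi_def s'_def algebra_simps)
        then have B: "(norm (Gm Q s' *v z - psi c v (s',t)))^2 = h^2 * K" by (simp add: K_def power_mult_distrib)
        have sx: "s' \<bullet> x = s \<bullet> x + h * x $ i" for x by (simp add: s'_def inner_add_left ee)
        have e1: "e \<bullet> e = 1" by (simp add: ee e_def)
        have ns: "(norm s')^2 = (norm s)^2 + 2 * h * s $ i + h^2"
          unfolding power2_norm_eq_inner s'_def using e1 by (simp add: inner_add_left inner_add_right ee inner_commute[of s e] power2_eq_square algebra_simps)
        have C: "Xi Q c v Vc \<beta> z (s',t) = Xi Q c v Vc \<beta> z (s,t) + h * ((csq z - z) $ i - inverse \<beta> * s $ i) - inverse \<beta> / 2 * h^2"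
          using ns sx[of "csq z - z"] by (simp add: Xi_eq algebra_simps)
        have A': "Xi Q c v Vc \<beta> z (s',t) - (h^2 * K) / l \<le> Xi Q c v Vc \<beta> z (s,t)"
          using A unfolding B .
        have D: "(inverse \<beta> / 2 + K / l) * h^2 = inverse \<beta> / 2 * h^2 + (h^2 * K) / l"
          by (simp add: distrib_right)
        show "h * ((csq z - z) $ i - inverse \<beta> * s $ i) \<le> (inverse \<beta> / 2 + K / l) * h^2"
          unfolding D using A' C by linarith
      qed
    qed
  qed
  show sig: "s = \<beta> *\<^sub>R (csq z - z)"
  proof -
    have "s $ i = \<beta> * (csq z - z) $ i" for i using gs[of i] bpos by (simp add: field_simps)
    then show ?thesis by (simp add: vec_eq_iff)
  qed
  define ep where "ep = csq z - z"
  have PbX: "Pbeta Q c \<beta> z = Xi Q c v Vc \<beta> z (s,t)"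
  proof -
    have e1: "s \<bullet> (csq z - z) = \<beta> * (norm (csq z - z))^2" by (simp add: sig power2_norm_eq_inner)
    have ns2: "(norm s)^2 = \<beta>^2 * (norm (csq z - z))^2" by (simp add: sig power_mult_distrib)
    define N where "N = (norm (csq z - z))^2"
    have e3: "(1/2) * inverse \<beta> * (norm s)^2 = (1/2) * \<beta> * N"
    proof -
      have j1: "inverse \<beta> * (\<beta>^2 * N) = (inverse \<beta> * \<beta>) * (\<beta> * N)" by (simp add: power2_eq_square mult_ac)
      have j2: "inverse \<beta> * \<beta> = 1" using bpos by simp
      have "inverse \<beta> * (\<beta>^2 * N) = \<beta> * N" using j1 j2 by simp
      then show ?thesis unfolding ns2 N_def[symmetric] by simp
    qed
    have e4: "t * (v \<bullet> z - Vc) = 0" using vz by simp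
    have "Xi Q c v Vc \<beta> z (s,t) = Pq Q c z + s \<bullet> (csq z - z) - (1/2) * inverse \<beta> * (norm s)^2 + t * (v \<bullet> z - Vc)"
      by (rule Xi_eq)
    also have "\<dots> = Pq Q c z + \<beta> * N - (1/2) * \<beta> * N + 0" unfolding e1 e3 e4 N_def ..
    also have "\<dots> = Pq Q c z + (1/2) * \<beta> * N" by simp
    also have "\<dots> = Pbeta Q c \<beta> z" unfolding Pbeta_def N_def ..
    finally show ?thesis ..
  qed
  then show "Pbeta Q c \<beta> z = Xi Q c v Vc \<beta> z (s,t)" .
  show "is_min_on (Pbeta Q c \<beta>) (Zb v Vc) z"
    unfolding is_min_on_def
  proof (intro conjI ballI)
    show "z \<in> Zb v Vc" using vz by (simp add: Zb_def)
    fix y assume y: "y \<in> Zb v Vc"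
    have "Pbeta Q c \<beta> z = Pd_beta Q c v Vc \<beta> (s,t)" using PbX PdX by simp
    also have "\<dots> \<le> Xi Q c v Vc \<beta> y (s,t)" by (rule Pd_le_Xi[OF symQ pd])
    also have "\<dots> \<le> Pbeta Q c \<beta> y"
    proof -
      define d where "d = csq y - y"
      have t1: "t * (v \<bullet> y - Vc) \<le> 0" using y tpos by (simp add: Zb_def mult_nonneg_nonpos)
      have t2: "s \<bullet> d \<le> norm s * norm d" by (rule norm_cauchy_schwarz)
      have t3: "norm s * norm d \<le> (1/2) * inverse \<beta> * (norm s)^2 + (1/2) * \<beta> * (norm d)^2"
        by (rule amgm_beta[OF bpos])
      have x1: "Xi Q c v Vc \<beta> y (s,t) = Pq Q c y + (s \<bullet> d - (1/2) * inverse \<beta> * (norm s)^2) + t * (v \<bullet> y - Vc)"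
        unfolding Xi_eq d_def by simp
      have x2: "Pbeta Q c \<beta> y = Pq Q c y + (1/2) * \<beta> * (norm d)^2" unfolding Pbeta_def d_def ..
      have x3: "s \<bullet> d - (1/2) * inverse \<beta> * (norm s)^2 \<le> (1/2) * \<beta> * (norm d)^2" using t2 t3 by linarith
      show ?thesis unfolding x1 x2 using x3 t1 by linarith
    qed
    finally show "Pbeta Q c \<beta> z \<le> Pbeta Q c \<beta> y" .
  qed
qed


lemma csq_Za: "z \<in> Za v Vc \<Longrightarrow> csq z = z"
  unfolding Za_def csq_def by (auto simp: vec_eq_iff power2_eq_square)

lemma Pbeta_Za: "z \<in> Za v Vc \<Longrightarrow> Pbeta Q c \<beta> z = Pq Q c z"
  using csq_Za[of z v Vc] by (simp add: Pbeta_def)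

theorem theorem2:
  fixes Q :: "real^'n^'n" and c v :: "real^'n" and Vc :: real
  assumes symQ: "transpose Q = Q"
    and v_nonneg: "\<forall>i. 0 \<le> v $ i"
    and Vc_pos: "Vc > 0"
  shows "(\<forall>\<beta> \<zeta>. \<beta> > 0 \<longrightarrow> is_max_on (Pd_beta Q c v Vc \<beta>) (Sa_plus Q) \<zeta> \<longrightarrow>
            is_min_on (Pbeta Q c \<beta>) (Zb v Vc) (zdual Q c v \<zeta>))
       \<and> (\<exists>\<beta>c>0. \<forall>\<beta> \<zeta>. \<beta> \<ge> \<beta>c \<longrightarrow> is_max_on (Pd_beta Q c v Vc \<beta>) (Sa_plus Q) \<zeta> \<longrightarrow>
            zdual Q c v \<zeta> \<in> Za v Vc \<longrightarrow>
              is_min_on (Pq Q c) (Za v Vc) (zdual Q c v \<zeta>)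
            \<and> Pq Q c (zdual Q c v \<zeta>) = (INF z\<in>Zb v Vc. Pbeta Q c \<beta> z)
            \<and> (INF z\<in>Zb v Vc. Pbeta Q c \<beta> z) = Xi Q c v Vc \<beta> (zdual Q c v \<zeta>) \<zeta>
            \<and> Xi Q c v Vc \<beta> (zdual Q c v \<zeta>) \<zeta> = (SUP \<xi>\<in>Sa_plus Q. Pd_beta Q c v Vc \<beta> \<xi>)
            \<and> (SUP \<xi>\<in>Sa_plus Q. Pd_beta Q c v Vc \<beta> \<xi>) = Pd_q Q c v Vc \<zeta>)"
proof (intro conjI)
  show "\<forall>\<beta> \<zeta>. \<beta> > 0 \<longrightarrow> is_max_on (Pd_beta Q c v Vc \<beta>) (Sa_plus Q) \<zeta> \<longrightarrow>
            is_min_on (Pbeta Q c \<beta>) (Zb v Vc) (zdual Q c v \<zeta>)"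
  proof (intro allI impI)
    fix \<beta> :: real and \<zeta> :: "(real^'n) \<times> real"
    assume b: "\<beta> > 0" and m: "is_max_on (Pd_beta Q c v Vc \<beta>) (Sa_plus Q) \<zeta>"
    obtain s t where st: "\<zeta> = (s,t)" by (cases \<zeta>)
    show "is_min_on (Pbeta Q c \<beta>) (Zb v Vc) (zdual Q c v \<zeta>)"
      using core(5)[OF symQ b m[unfolded st]] st by simp
  qed
  show "\<exists>\<beta>c>0. \<forall>\<beta> \<zeta>. \<beta> \<ge> \<beta>c \<longrightarrow> is_max_on (Pd_beta Q c v Vc \<beta>) (Sa_plus Q) \<zeta> \<longrightarrow>
            zdual Q c v \<zeta> \<in> Za v Vc \<longrightarrow>
              is_min_on (Pq Q c) (Za v Vc) (zdual Q c v \<zeta>)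
            \<and> Pq Q c (zdual Q c v \<zeta>) = (INF z\<in>Zb v Vc. Pbeta Q c \<beta> z)
            \<and> (INF z\<in>Zb v Vc. Pbeta Q c \<beta> z) = Xi Q c v Vc \<beta> (zdual Q c v \<zeta>) \<zeta>
            \<and> Xi Q c v Vc \<beta> (zdual Q c v \<zeta>) \<zeta> = (SUP \<xi>\<in>Sa_plus Q. Pd_beta Q c v Vc \<beta> \<xi>)
            \<and> (SUP \<xi>\<in>Sa_plus Q. Pd_beta Q c v Vc \<beta> \<xi>) = Pd_q Q c v Vc \<zeta>"
  proof (intro exI[of _ 1] conjI allI impI)
    show "(0::real) < 1" by simp
    fix \<beta> :: real and \<zeta> :: "(real^'n) \<times> real"
    assume b1: "1 \<le> \<beta>" and m: "is_max_on (Pd_beta Q c v Vc \<beta>) (Sa_plus Q) \<zeta>"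
      and za: "zdual Q c v \<zeta> \<in> Za v Vc"
    have b: "\<beta> > 0" using b1 by simp
    obtain s t where st: "\<zeta> = (s,t)" by (cases \<zeta>)
    define z where "z = zdual Q c v (s,t)"
    have m': "is_max_on (Pd_beta Q c v Vc \<beta>) (Sa_plus Q) (s,t)" using m st by simp
    have zza: "z \<in> Za v Vc" using za st z_def by simp
    have sig: "s = \<beta> *\<^sub>R (csq z - z)" using core(1)[OF symQ b m'] z_def by simp
    have s0: "s = 0" using sig csq_Za[OF zza] by simp
    have PbX: "Pbeta Q c \<beta> z = Xi Q c v Vc \<beta> z (s,t)" using core(3)[OF symQ b m'] z_def by simp
    have PdX: "Pd_beta Q c v Vc \<beta> (s,t) = Xi Q c v Vc \<beta> z (s,t)" using core(4)[OF symQ b m'] z_def by simp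
    have mn: "is_min_on (Pbeta Q c \<beta>) (Zb v Vc) z" using core(5)[OF symQ b m'] z_def by simp
    have sub: "Za v Vc \<subseteq> Zb v Vc" unfolding Za_def Zb_def by auto
    have Pqz: "Pq Q c z = Pbeta Q c \<beta> z" using Pbeta_Za[OF zza] by simp
    have INF: "(INF y\<in>Zb v Vc. Pbeta Q c \<beta> y) = Pbeta Q c \<beta> z"
      using mn unfolding is_min_on_def by (intro cInf_eq_minimum) auto
    have SUP: "(SUP \<xi>\<in>Sa_plus Q. Pd_beta Q c v Vc \<beta> \<xi>) = Pd_beta Q c v Vc \<beta> (s,t)"
      using m' unfolding is_max_on_def by (intro cSup_eq_maximum) auto
    show "is_min_on (Pq Q c) (Za v Vc) (zdual Q c v \<zeta>)"
      unfolding is_min_on_def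
    proof (intro conjI ballI)
      show "zdual Q c v \<zeta> \<in> Za v Vc" by (rule za)
      fix y assume y: "y \<in> Za v Vc"
      have "Pbeta Q c \<beta> z \<le> Pbeta Q c \<beta> y" using mn y sub unfolding is_min_on_def by auto
      then show "Pq Q c (zdual Q c v \<zeta>) \<le> Pq Q c y"
        using Pqz Pbeta_Za[OF y] st z_def by simp
    qed
    show "Pq Q c (zdual Q c v \<zeta>) = (INF z\<in>Zb v Vc. Pbeta Q c \<beta> z)"
      using Pqz INF st z_def by simp
    show "(INF z\<in>Zb v Vc. Pbeta Q c \<beta> z) = Xi Q c v Vc \<beta> (zdual Q c v \<zeta>) \<zeta>"
      using INF PbX st z_def by simp
    show "Xi Q c v Vc \<beta> (zdual Q c v \<zeta>) \<zeta> = (SUP \<xi>\<in>Sa_plus Q. Pd_beta Q c v Vc \<beta> \<xi>)"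
      using SUP PdX st z_def by simp
    show "(SUP \<xi>\<in>Sa_plus Q. Pd_beta Q c v Vc \<beta> \<xi>) = Pd_q Q c v Vc \<zeta>"
      using SUP st s0 by (simp add: Pd_beta_def Pd_q_def)
  qed
qed

end
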